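(* Let $\lambda,\mu,\nu\in\mathcal{P}_k^+$. (i) The coefficient $f^\nu_{\lambda\mu}$ equals the cardinality of $\{(w,w')\in S^\lambda\times S^\mu:\lambda\circ w+\mu\circ w'=\nu\}$. (ii) $\chi_{\lambda/\mu}$ equals the cardinality of $\{w\in S^\mu:\mu_{w(i)}\le\lambda_i\text{ for all }i\in[k]\}$.
   Context: $[k]=\{1,\dots,k\}$. $\mathcal{P}_k^+$ is the set of $\lambda\in\mathbb{Z}^k$ with $\lambda_1\ge\cdots\ge\lambda_k\ge0$, identified with partitions having at most $k$ nonzero parts. $f^\nu_{\lambda\mu}$ is defined by $m_\lambda m_\mu=\sum_\nu f^\nu_{\lambda\mu}m_\nu$ in the ring of symmetric functions ($m_\lambda$ the monomial symmetric functions). For $\lambda\in\mathbb{Z}^k$ and $w\in S_k$, $\lambda\circ w=(\lambda_{w(1)},\dots,\lambda_{w(k)})$; $S_\lambda\subset S_k$ is the stabiliser of $\lambda$, and $S^\lambda$ is the set of minimal length (with respect to the simple transpositions) representatives of the right cosets $S_\lambda\backslash S_k$. For partitions $\lambda,\mu$ with conjugates $\lambda',\mu'$, $\chi_{\lambda/\mu}=\prod_{i\ge1}\binom{\lambda'_i-\mu'_{i+1}}{\mu'_i-\mu'_{i+1}}$ if $\mu\subset\lambda$ and $0$ otherwise. *)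

theory Defs
  imports "HOL-Combinatorics.Permutations"
begin

text \<open>Elements of \<open>P_k^+\<close>: \<open>\<lambda> :: nat \<Rightarrow> nat\<close>, entries indexed by \<open>[k] = {1..k}\<close>,
  weakly decreasing, and zero outside \<open>[k]\<close> (identification with partitions).\<close>
definition Pk_plus :: "nat \<Rightarrow> (nat \<Rightarrow> nat) \<Rightarrow> bool" where
  "Pk_plus k lam \<longleftrightarrow> (\<forall>i. i \<notin> {1..k} \<longrightarrow> lam i = 0) \<and>
     (\<forall>i j. 1 \<le> i \<longrightarrow> i \<le> j \<longrightarrow> lam j \<le> lam i)"

text \<open>Formal power series in the variables \<open>x_0, x_1, ...\<close> with integer coefficients,
  indexed by exponent vectors \<open>nat \<Rightarrow> nat\<close> (only finitely supported ones matter).\<close>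
type_synonym fps_inf = "(nat \<Rightarrow> nat) \<Rightarrow> int"

definition series_mult :: "fps_inf \<Rightarrow> fps_inf \<Rightarrow> fps_inf" where
  "series_mult f g = (\<lambda>nu. \<Sum>a\<in>{a. \<forall>i. a i \<le> nu i}. f a * g (\<lambda>i. nu i - a i))"

text \<open>Monomial symmetric function \<open>m_\<lambda>\<close>: the sum of all distinct monomials whose
  exponent vector is a rearrangement of \<open>\<lambda>\<close>.\<close>
definition msym :: "(nat \<Rightarrow> nat) \<Rightarrow> fps_inf" where
  "msym lam = (\<lambda>a. if (\<exists>s. bij s \<and> a = lam \<circ> s) then 1 else 0)"

text \<open>\<open>f^\<nu>_{\<lambda>\<mu>}\<close>: the coefficient of \<open>m_\<nu>\<close> in \<open>m_\<lambda> m_\<mu>\<close>, i.e. the coefficient of the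
  monomial \<open>x^\<nu>\<close> in the product.\<close>
definition fcoeff :: "(nat \<Rightarrow> nat) \<Rightarrow> (nat \<Rightarrow> nat) \<Rightarrow> (nat \<Rightarrow> nat) \<Rightarrow> int" where
  "fcoeff lam mu nu = series_mult (msym lam) (msym mu) nu"

definition Sk :: "nat \<Rightarrow> (nat \<Rightarrow> nat) set" where
  "Sk k = {w. w permutes {1..k}}"

text \<open>Coxeter length w.r.t. simple transpositions = number of inversions.\<close>
definition perm_length :: "nat \<Rightarrow> (nat \<Rightarrow> nat) \<Rightarrow> nat" where
  "perm_length k w = card {(i, j). 1 \<le> i \<and> i < j \<and> j \<le> k \<and> w j < w i}"

definition stab :: "nat \<Rightarrow> (nat \<Rightarrow> nat) \<Rightarrow> (nat \<Rightarrow> nat) set" where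
  "stab k lam = {w \<in> Sk k. \<forall>i\<in>{1..k}. lam (w i) = lam i}"

definition minreps :: "nat \<Rightarrow> (nat \<Rightarrow> nat) \<Rightarrow> (nat \<Rightarrow> nat) set" where
  "minreps k lam = {w \<in> Sk k. \<forall>u\<in>stab k lam. perm_length k w \<le> perm_length k (u \<circ> w)}"

definition conj_part :: "(nat \<Rightarrow> nat) \<Rightarrow> nat \<Rightarrow> nat" where
  "conj_part lam i = card {j. 1 \<le> j \<and> i \<le> lam j}"

text \<open>\<open>\<chi>_{\<lambda>/\<mu>}\<close>; the infinite product is restricted to \<open>i \<le> \<lambda>_1\<close>, since all later
  factors equal \<open>binom 0 0 = 1\<close> when \<open>\<mu> \<subseteq> \<lambda>\<close>.\<close>
definition chi :: "(nat \<Rightarrow> nat) \<Rightarrow> (nat \<Rightarrow> nat) \<Rightarrow> nat" where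
  "chi lam mu = (if (\<forall>i. mu i \<le> lam i) then
     (\<Prod>i\<in>{1..lam 1}. (conj_part lam i - conj_part mu (Suc i)) choose
                        (conj_part mu i - conj_part mu (Suc i)))
   else 0)"

end

theory Submission
  imports Defs
begin

definition Qc :: "nat \<Rightarrow> (nat \<Rightarrow> nat) \<Rightarrow> (nat \<Rightarrow> nat) \<Rightarrow> bool" where
  "Qc k x v \<longleftrightarrow> (\<forall>i\<in>{1..k}. \<forall>j\<in>{1..k}. i < j \<longrightarrow> x (v i) = x (v j) \<longrightarrow> v i < v j)"

definition invs :: "nat \<Rightarrow> (nat \<Rightarrow> nat) \<Rightarrow> (nat \<times> nat) set" where
  "invs k w = {(i, j). 1 \<le> i \<and> i < j \<and> j \<le> k \<and> w j < w i}"

lemma finite_invs: "finite (invs k w)"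
  by (rule finite_subset[of _ "{1..k} \<times> {1..k}"]) (auto simp: invs_def)

lemma perm_length_invs: "perm_length k w = card (invs k w)"
  by (simp add: perm_length_def invs_def)

lemma Pk_dec: "Pk_plus k x \<Longrightarrow> 1 \<le> i \<Longrightarrow> i \<le> j \<Longrightarrow> x j \<le> x i"
  by (simp add: Pk_plus_def)

lemma Pk_out: "Pk_plus k x \<Longrightarrow> j \<notin> {1..k} \<Longrightarrow> x j = 0"
  by (simp add: Pk_plus_def)

lemma Sk_in: "w \<in> Sk k \<Longrightarrow> i \<in> {1..k} \<Longrightarrow> w i \<in> {1..k}"
proof -
  assume "w \<in> Sk k" "i \<in> {1..k}"
  hence "w permutes {1..k}" by (simp add: Sk_def)
  thus ?thesis using permutes_in_image[of w "{1..k}" i] \<open>i \<in> {1..k}\<close> by simp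
qed

lemma Sk_out: "w \<in> Sk k \<Longrightarrow> i \<notin> {1..k} \<Longrightarrow> w i = i"
  by (simp add: Sk_def permutes_not_in)

lemma invs_sub:
  assumes P: "Pk_plus k x" and v: "v \<in> Sk k" and Q: "Qc k x v" and y: "y \<in> Sk k"
    and eq: "\<forall>i\<in>{1..k}. x (y i) = x (v i)"
  shows "invs k v \<subseteq> invs k y"
proof
  fix p assume "p \<in> invs k v"
  then obtain i j where p: "p = (i, j)" and ij: "1 \<le> i" "i < j" "j \<le> k" "v j < v i"
    by (auto simp: invs_def)
  have iK: "i \<in> {1..k}" and jK: "j \<in> {1..k}" using ij by auto
  have vjK: "v j \<in> {1..k}" and viK: "v i \<in> {1..k}" using Sk_in[OF v] iK jK by auto
  have yjK: "y j \<in> {1..k}" and yiK: "y i \<in> {1..k}" using Sk_in[OF y] iK jK by auto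
  have ne: "x (v i) \<noteq> x (v j)" using Q iK jK ij unfolding Qc_def by force
  have "x (v i) \<le> x (v j)" using Pk_dec[OF P, of "v j" "v i"] vjK ij by auto
  hence lt: "x (y i) < x (y j)" using ne eq iK jK by auto
  have "y j < y i"
  proof (rule ccontr)
    assume "\<not> y j < y i"
    hence "y i \<le> y j" by simp
    hence "x (y j) \<le> x (y i)" using Pk_dec[OF P, of "y i" "y j"] yiK by auto
    thus False using lt by simp
  qed
  thus "p \<in> invs k y" using p ij by (auto simp: invs_def)
qed

lemma Q_unique:
  assumes x: "x \<in> Sk k" and y: "y \<in> Sk k" and Qx: "Qc k lam x" and Qy: "Qc k lam y"
    and eq: "\<forall>i\<in>{1..k}. lam (x i) = lam (y i)"
  shows "x = y"
proof (rule ccontr)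
  assume "x \<noteq> y"
  then obtain i0 where "x i0 \<noteq> y i0" by auto
  hence "i0 \<in> {1..k}" using Sk_out[OF x, of i0] Sk_out[OF y, of i0] by metis
  define D where "D = {i\<in>{1..k}. x i \<noteq> y i}"
  have "i0 \<in> D" using \<open>x i0 \<noteq> y i0\<close> \<open>i0 \<in> {1..k}\<close> by (simp add: D_def)
  then obtain i where iD: "i \<in> D" and imin: "\<forall>l. l \<in> D \<longrightarrow> x i \<le> x l"
    using ex_has_least_nat[of "\<lambda>l. l \<in> D" i0 x] by blast
  have iK: "i \<in> {1..k}" and xyi: "x i \<noteq> y i" using iD by (auto simp: D_def)
  have bx: "bij_betw x {1..k} {1..k}" and "bij_betw y {1..k} {1..k}"
    using x y by (auto simp: Sk_def permutes_imp_bij)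
  hence "y ` {1..k} = {1..k}" by (simp add: bij_betw_def)
  moreover have "x i \<in> {1..k}" using Sk_in[OF x iK] .
  ultimately obtain i' where i'K: "i' \<in> {1..k}" and yi': "y i' = x i" by (metis imageE)
  have injx: "inj_on x {1..k}" and injy: "inj_on y {1..k}"
    using bx \<open>bij_betw y {1..k} {1..k}\<close> by (auto simp: bij_betw_def)
  have ii': "i \<noteq> i'" using yi' xyi by auto
  have "x i' \<noteq> x i" using inj_onD[OF injx, of i' i] ii' iK i'K by auto
  hence i'D: "i' \<in> D" using yi' i'K by (simp add: D_def)
  have "x i \<le> x i'" using imin i'D by blast
  hence xi'gt: "x i < x i'" using \<open>x i' \<noteq> x i\<close> by simp
  have yigt: "x i < y i"
  proof (rule ccontr)
    assume "\<not> x i < y i"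
    hence lt: "y i < x i" using xyi by simp
    have "x ` {1..k} = {1..k}" using bx by (simp add: bij_betw_def)
    moreover have "y i \<in> {1..k}" using Sk_in[OF y iK] .
    ultimately obtain i'' where i''K: "i'' \<in> {1..k}" and xi'': "x i'' = y i" by (metis imageE)
    have "i'' \<in> D"
    proof (rule ccontr)
      assume "i'' \<notin> D"
      hence "y i'' = x i''" using i''K by (simp add: D_def)
      hence "y i'' = y i" using xi'' by simp
      hence "i'' = i" using inj_onD[OF injy, of i'' i] i''K iK by auto
      thus False using xi'' xyi by simp
    qed
    hence "x i \<le> x i''" using imin by blast
    thus False using lt xi'' by simp
  qed
  have cls: "lam (x i) = lam (x i')" using eq i'K yi' by simp
  have cls2: "lam (y i) = lam (y i')" using eq iK yi' by simp
  show False
  proof (cases "i < i'")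
    case True
    have "y i < y i'" using Qy iK i'K True cls2 unfolding Qc_def by blast
    thus False using yi' yigt by simp
  next
    case False
    hence "i' < i" using ii' by simp
    have "x i' < x i" using Qx i'K iK \<open>i' < i\<close> cls[symmetric] unfolding Qc_def by simp
    thus False using xi'gt by simp
  qed
qed

lemma swap_ineq:
  fixes i j a b :: nat assumes "i < j" "b < a" shows "i*a + j*b < i*b + j*a"
proof -
  obtain d where d: "j = i + Suc d" using assms(1) less_iff_Suc_add by auto
  obtain e where e: "a = b + Suc e" using assms(2) less_iff_Suc_add by auto
  show ?thesis unfolding d e by (simp add: algebra_simps)
qed

lemma Q_exists:
  assumes w: "w \<in> Sk k"
  shows "\<exists>v\<in>Sk k. Qc k lam v \<and> (\<forall>i\<in>{1..k}. lam (v i) = lam (w i))"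
proof -
  define F where "F = {v\<in>Sk k. \<forall>i\<in>{1..k}. lam (v i) = lam (w i)}"
  define \<Phi> where "\<Phi> v = (\<Sum>l\<in>{1..k}. l * v l)" for v :: "nat \<Rightarrow> nat"
  have finF: "finite F" unfolding F_def Sk_def
    by (rule finite_subset[OF _ finite_permutations[of "{1..k}"]]) auto
  have wF: "w \<in> F" using w by (simp add: F_def)
  define M where "M = Max (\<Phi> ` F)"
  have "M \<in> \<Phi> ` F" unfolding M_def using finF wF by (intro Max_in) auto
  then obtain v where vF: "v \<in> F" and vM: "\<Phi> v = M" by auto
  have vmax: "\<Phi> u \<le> \<Phi> v" if "u \<in> F" for u
    using vM that finF unfolding M_def by (auto intro: Max_ge)
  have v: "v \<in> Sk k" and veq: "\<forall>i\<in>{1..k}. lam (v i) = lam (w i)" using vF by (auto simp: F_def)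
  have "Qc k lam v"
    unfolding Qc_def
  proof (intro ballI impI)
    fix i j assume iK: "i \<in> {1..k}" and jK: "j \<in> {1..k}" and ij: "i < j"
      and cl: "lam (v i) = lam (v j)"
    show "v i < v j"
    proof (rule ccontr)
      assume "\<not> v i < v j"
      moreover have "v i \<noteq> v j"
      proof
        assume "v i = v j"
        moreover have "inj v" using v by (auto simp: Sk_def permutes_bij bij_is_inj)
        ultimately show False using ij by (auto dest: injD)
      qed
      ultimately have lt: "v j < v i" by simp
      define v' where "v' = v \<circ> Transposition.transpose i j"
      have "v' permutes {1..k}" unfolding v'_def
        using v iK jK by (intro permutes_compose permutes_swap_id) (auto simp: Sk_def)
      hence v'S: "v' \<in> Sk k" by (simp add: Sk_def)
      have "\<forall>l\<in>{1..k}. lam (v' l) = lam (w l)"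
      proof
        fix l assume lK: "l \<in> {1..k}"
        show "lam (v' l) = lam (w l)"
          using veq lK iK jK cl by (auto simp: v'_def Transposition.transpose_def)
      qed
      hence v'F: "v' \<in> F" using v'S by (simp add: F_def)
      define R where "R = {1..k} - {i} - {j}"
      have sR: "(\<Sum>l\<in>R. l * v' l) = (\<Sum>l\<in>R. l * v l)"
        by (rule sum.cong) (auto simp: R_def v'_def Transposition.transpose_def)
      have split: "\<Phi> u = i * u i + (j * u j + (\<Sum>l\<in>R. l * u l))" for u
      proof -
        have "\<Phi> u = i * u i + (\<Sum>l\<in>{1..k} - {i}. l * u l)"
          unfolding \<Phi>_def using iK by (simp add: sum.remove)
        also have "(\<Sum>l\<in>{1..k} - {i}. l * u l) = j * u j + (\<Sum>l\<in>R. l * u l)"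
          unfolding R_def using jK ij by (subst sum.remove[of _ j]) auto
        finally show ?thesis .
      qed
      have "v' i = v j" "v' j = v i" by (auto simp: v'_def)
      hence "\<Phi> v < \<Phi> v'" using split[of v] split[of v'] sR swap_ineq[OF ij lt] by simp
      thus False using vmax[OF v'F] by simp
    qed
  qed
  thus ?thesis using v veq by blast
qed

lemma Sk_inj: "v \<in> Sk k \<Longrightarrow> inj v"
  by (auto simp: Sk_def permutes_bij bij_is_inj)

lemma minreps_Q:
  assumes P: "Pk_plus k x"
  shows "minreps k x = {v\<in>Sk k. Qc k x v}"
proof
  show "{v\<in>Sk k. Qc k x v} \<subseteq> minreps k x"
  proof
    fix v assume "v \<in> {v\<in>Sk k. Qc k x v}"
    hence v: "v \<in> Sk k" and Q: "Qc k x v" by auto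
    have "perm_length k v \<le> perm_length k (u \<circ> v)" if u: "u \<in> stab k x" for u
    proof -
      have uS: "u \<in> Sk k" and ust: "\<forall>i\<in>{1..k}. x (u i) = x i" using u by (auto simp: stab_def)
      have "u \<circ> v permutes {1..k}" using uS v by (auto simp: Sk_def intro: permutes_compose)
      hence uvS: "u \<circ> v \<in> Sk k" by (simp add: Sk_def)
      have "\<forall>i\<in>{1..k}. x ((u \<circ> v) i) = x (v i)" using ust Sk_in[OF v] by simp
      hence "invs k v \<subseteq> invs k (u \<circ> v)" by (rule invs_sub[OF P v Q uvS])
      thus ?thesis unfolding perm_length_invs by (intro card_mono finite_invs)
    qed
    thus "v \<in> minreps k x" using v by (simp add: minreps_def)
  qed
next
  show "minreps k x \<subseteq> {v\<in>Sk k. Qc k x v}"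
  proof
    fix v assume vm: "v \<in> minreps k x"
    hence v: "v \<in> Sk k" by (simp add: minreps_def)
    obtain v0 where v0: "v0 \<in> Sk k" and Q0: "Qc k x v0" and eq0: "\<forall>i\<in>{1..k}. x (v0 i) = x (v i)"
      using Q_exists[OF v, of x] by blast
    have vp: "v permutes {1..k}" and v0p: "v0 permutes {1..k}" using v v0 by (auto simp: Sk_def)
    define u where "u = v0 \<circ> inv v"
    have up: "u permutes {1..k}" unfolding u_def using vp v0p by (intro permutes_compose permutes_inv)
    have "\<forall>i\<in>{1..k}. x (u i) = x i"
    proof
      fix i assume iK: "i \<in> {1..k}"
      have "inv v i \<in> {1..k}" using permutes_in_image[OF permutes_inv[OF vp]] iK by blast
      hence "x (v0 (inv v i)) = x (v (inv v i))" using eq0 by blast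
      also have "v (inv v i) = i" using permutes_inverses(1)[OF vp] .
      finally show "x (u i) = x i" by (simp add: u_def)
    qed
    hence ust: "u \<in> stab k x" using up by (simp add: stab_def Sk_def)
    have "u \<circ> v = v0" unfolding u_def using permutes_inv_o(2)[OF vp] by (metis comp_assoc comp_id)
    hence len: "perm_length k v \<le> perm_length k v0" using vm ust by (auto simp: minreps_def)
    have "v = v0"
    proof (rule ccontr)
      assume ne: "v \<noteq> v0"
      have "\<not> Qc k x v" using Q_unique[OF v v0 _ Q0] eq0 ne by auto
      then obtain i j where iK: "i \<in> {1..k}" and jK: "j \<in> {1..k}" and ij: "i < j"
        and cl: "x (v i) = x (v j)" and nlt: "\<not> v i < v j" unfolding Qc_def by blast
      have "v i \<noteq> v j" using Sk_inj[OF v] ij by (auto dest: injD)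
      hence "v j < v i" using nlt by simp
      hence inv1: "(i, j) \<in> invs k v" using iK jK ij by (auto simp: invs_def)
      have "v0 i < v0 j" using Q0 iK jK ij cl eq0 unfolding Qc_def by auto
      hence inv2: "(i, j) \<notin> invs k v0" by (auto simp: invs_def)
      have "\<forall>i\<in>{1..k}. x (v i) = x (v0 i)" using eq0 by simp
      hence "invs k v0 \<subseteq> invs k v" by (rule invs_sub[OF P v0 Q0 v])
      hence "invs k v0 \<subset> invs k v" using inv1 inv2 by blast
      hence "card (invs k v0) < card (invs k v)" by (intro psubset_card_mono finite_invs)
      thus False using len unfolding perm_length_invs by simp
    qed
    thus "v \<in> {v\<in>Sk k. Qc k x v}" using v0 Q0 by simp
  qed
qed

definition Zk :: "nat \<Rightarrow> (nat \<Rightarrow> nat) \<Rightarrow> bool" where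
  "Zk k b \<longleftrightarrow> (\<forall>j. j \<notin> {1..k} \<longrightarrow> b j = 0)"

definition Rk :: "nat \<Rightarrow> (nat \<Rightarrow> nat) \<Rightarrow> (nat \<Rightarrow> nat) set" where
  "Rk k x = {b. Zk k b \<and> (\<forall>i\<ge>1. conj_part b i = conj_part x i)}"

lemma Pk_Zk: "Pk_plus k x \<Longrightarrow> Zk k x"
  by (simp add: Pk_plus_def Zk_def)

lemma conj_K: "Zk k b \<Longrightarrow> 1 \<le> i \<Longrightarrow> conj_part b i = card {j\<in>{1..k}. i \<le> b j}"
  unfolding conj_part_def Zk_def
  by (rule arg_cong[where f=card]) (force)

lemma fibers:
  assumes Zb: "Zk k b" and Zx: "Zk k x" and cj: "\<forall>i\<ge>1. conj_part b i = conj_part x i"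
  shows "card {j\<in>{1..k}. b j = c} = card {j\<in>{1..k}. x j = c}"
proof -
  have lev: "card {j\<in>{1..k}. i \<le> b j} = card {j\<in>{1..k}. i \<le> x j}" if "1 \<le> i" for i
    using cj conj_K[OF Zb that] conj_K[OF Zx that] that by simp
  have gen: "card {j\<in>{1..k}. y j = c} =
     (if c = 0 then k - card {j\<in>{1..k}. 1 \<le> y j}
      else card {j\<in>{1..k}. c \<le> y j} - card {j\<in>{1..k}. Suc c \<le> y j})" for y :: "nat \<Rightarrow> nat"
  proof (cases "c = 0")
    case True
    have "{j\<in>{1..k}. y j = c} = {1..k} - {j\<in>{1..k}. 1 \<le> y j}" using True by auto
    moreover have "card ({1..k} - {j\<in>{1..k}. 1 \<le> y j}) = card {1..k} - card {j\<in>{1..k}. 1 \<le> y j}"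
      by (intro card_Diff_subset) auto
    ultimately have "card {j\<in>{1..k}. y j = c} = card {1..k} - card {j\<in>{1..k}. 1 \<le> y j}"
      by simp
    thus ?thesis using True by simp
  next
    case False
    have "{j\<in>{1..k}. y j = c} = {j\<in>{1..k}. c \<le> y j} - {j\<in>{1..k}. Suc c \<le> y j}" by auto
    hence "card {j\<in>{1..k}. y j = c} = card {j\<in>{1..k}. c \<le> y j} - card {j\<in>{1..k}. Suc c \<le> y j}"
      by (simp add: card_Diff_subset Collect_mono_iff)
    thus ?thesis using False by simp
  qed
  show ?thesis
    using gen[of b] gen[of x] lev[of 1] lev[of c] lev[of "Suc c"] by (cases "c = 0") auto
qed

lemma glue:
  assumes fin: "finite K" and cd: "\<forall>c. card {j\<in>K. b j = c} = card {j\<in>K. x j = c}"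
  shows "\<exists>w. w permutes K \<and> (\<forall>j\<in>K. x (w j) = b j)"
proof -
  have "\<forall>c. \<exists>f. bij_betw f {j\<in>K. b j = c} {j\<in>K. x j = c}"
    using cd fin by (auto intro!: finite_same_card_bij)
  then obtain f where f: "\<And>c. bij_betw (f c) {j\<in>K. b j = c} {j\<in>K. x j = c}" by metis
  define w where "w j = (if j \<in> K then f (b j) j else j)" for j
  have wK: "w j \<in> K \<and> x (w j) = b j" if "j \<in> K" for j
  proof -
    have "j \<in> {l\<in>K. b l = b j}" using that by simp
    hence "f (b j) j \<in> {l\<in>K. x l = b j}" using f[of "b j"] by (auto simp: bij_betw_def)
    thus ?thesis using that by (simp add: w_def)
  qed
  have inj: "inj_on w K"
  proof (rule inj_onI)
    fix j1 j2 assume j1: "j1 \<in> K" and j2: "j2 \<in> K" and e: "w j1 = w j2"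
    have "b j1 = b j2" using wK[OF j1] wK[OF j2] e by metis
    hence "f (b j1) j1 = f (b j1) j2" using e j1 j2 by (simp add: w_def)
    moreover have "inj_on (f (b j1)) {l\<in>K. b l = b j1}" using f by (auto simp: bij_betw_def)
    ultimately show "j1 = j2" using j1 j2 \<open>b j1 = b j2\<close> by (auto dest: inj_onD)
  qed
  have "w ` K \<subseteq> K" using wK by auto
  hence "w ` K = K" using endo_inj_surj[OF fin _ inj] by simp
  hence "bij_betw w K K" using inj by (simp add: bij_betw_def)
  hence "w permutes K" by (rule bij_imp_permutes) (simp add: w_def)
  thus ?thesis using wK by blast
qed

lemma Sk_image_Rk:
  assumes Zx: "Zk k x"
  shows "(\<lambda>w. x \<circ> w) ` Sk k = Rk k x"
proof
  show "(\<lambda>w. x \<circ> w) ` Sk k \<subseteq> Rk k x"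
  proof
    fix b assume "b \<in> (\<lambda>w. x \<circ> w) ` Sk k"
    then obtain w where w: "w \<in> Sk k" and b: "b = x \<circ> w" by auto
    have Zb: "Zk k b" using Zx Sk_out[OF w] by (simp add: Zk_def b)
    have "conj_part b i = conj_part x i" if i: "1 \<le> i" for i
    proof -
      have "w ` {j\<in>{1..k}. i \<le> b j} = {p\<in>{1..k}. i \<le> x p}"
      proof
        show "w ` {j\<in>{1..k}. i \<le> b j} \<subseteq> {p\<in>{1..k}. i \<le> x p}" using Sk_in[OF w] by (auto simp: b)
      next
        show "{p\<in>{1..k}. i \<le> x p} \<subseteq> w ` {j\<in>{1..k}. i \<le> b j}"
        proof
          fix p assume p: "p \<in> {p\<in>{1..k}. i \<le> x p}"
          have wp: "w permutes {1..k}" using w by (simp add: Sk_def)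
          have "inv w p \<in> {1..k}" using permutes_in_image[OF permutes_inv[OF wp]] p by blast
          moreover have "w (inv w p) = p" using permutes_inverses(1)[OF wp] .
          ultimately show "p \<in> w ` {j\<in>{1..k}. i \<le> b j}" using p
            by (metis (mono_tags, lifting) b comp_apply image_eqI mem_Collect_eq)
        qed
      qed
      moreover have "inj_on w {j\<in>{1..k}. i \<le> b j}" using Sk_inj[OF w] by (auto intro: inj_on_subset)
      ultimately have "card {j\<in>{1..k}. i \<le> b j} = card {p\<in>{1..k}. i \<le> x p}"
        using card_image by fastforce
      thus ?thesis using conj_K[OF Zb i] conj_K[OF Zx i] by simp
    qed
    thus "b \<in> Rk k x" using Zb by (simp add: Rk_def)
  qed
next
  show "Rk k x \<subseteq> (\<lambda>w. x \<circ> w) ` Sk k"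
  proof
    fix b assume "b \<in> Rk k x"
    hence Zb: "Zk k b" and cj: "\<forall>i\<ge>1. conj_part b i = conj_part x i" by (auto simp: Rk_def)
    obtain w where wp: "w permutes {1..k}" and wb: "\<forall>j\<in>{1..k}. x (w j) = b j"
      using glue[of "{1..k}" b x] fibers[OF Zb Zx cj] by auto
    have "b = x \<circ> w"
    proof
      fix j show "b j = (x \<circ> w) j"
        using wb Zb Zx permutes_not_in[OF wp, of j] by (cases "j \<in> {1..k}") (auto simp: Zk_def)
    qed
    thus "b \<in> (\<lambda>w. x \<circ> w) ` Sk k" using wp by (auto simp: Sk_def)
  qed
qed

lemma minreps_img:
  assumes P: "Pk_plus k x"
  shows "(\<lambda>w. x \<circ> w) ` minreps k x = Rk k x"
proof
  show "(\<lambda>w. x \<circ> w) ` minreps k x \<subseteq> Rk k x"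
    using Sk_image_Rk[OF Pk_Zk[OF P]] by (auto simp: minreps_def)
next
  show "Rk k x \<subseteq> (\<lambda>w. x \<circ> w) ` minreps k x"
  proof
    fix b assume "b \<in> Rk k x"
    then obtain w0 where w0: "w0 \<in> Sk k" and b: "b = x \<circ> w0"
      using Sk_image_Rk[OF Pk_Zk[OF P]] by auto
    obtain v where v: "v \<in> Sk k" and Q: "Qc k x v" and eq: "\<forall>i\<in>{1..k}. x (v i) = x (w0 i)"
      using Q_exists[OF w0, of x] by blast
    have vm: "v \<in> minreps k x" using minreps_Q[OF P] v Q by simp
    have "x \<circ> v = b"
    proof
      fix j show "(x \<circ> v) j = b j"
        using eq Sk_out[OF v, of j] Sk_out[OF w0, of j] b by (cases "j \<in> {1..k}") auto
    qed
    thus "b \<in> (\<lambda>w. x \<circ> w) ` minreps k x" using vm by blast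
  qed
qed

lemma minreps_inj:
  assumes P: "Pk_plus k x"
  shows "inj_on (\<lambda>w. x \<circ> w) (minreps k x)"
proof (rule inj_onI)
  fix v1 v2 assume v1: "v1 \<in> minreps k x" and v2: "v2 \<in> minreps k x" and e: "x \<circ> v1 = x \<circ> v2"
  have "v1 \<in> Sk k" "Qc k x v1" "v2 \<in> Sk k" "Qc k x v2" using v1 v2 minreps_Q[OF P] by auto
  moreover have "\<forall>i\<in>{1..k}. x (v1 i) = x (v2 i)" using e by (metis comp_apply)
  ultimately show "v1 = v2" using Q_unique by blast
qed

lemma msym_Rk:
  assumes Zx: "Zk k x" and Za: "Zk k a"
  shows "(\<exists>s. bij s \<and> a = x \<circ> s) \<longleftrightarrow> a \<in> Rk k x"
proof
  assume "\<exists>s. bij s \<and> a = x \<circ> s"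
  then obtain s where s: "bij s" and a: "a = x \<circ> s" by blast
  have "conj_part a i = conj_part x i" if i: "1 \<le> i" for i
  proof -
    have x0: "x 0 = 0" and a0: "a 0 = 0" using Zx Za by (auto simp: Zk_def)
    have "{j. 1 \<le> j \<and> i \<le> a j} = s -` {p. 1 \<le> p \<and> i \<le> x p}"
    proof -
      have "\<And>j. i \<le> a j \<Longrightarrow> 1 \<le> j" using a0 i by (metis less_one not_le order_trans)
      moreover have "\<And>p. i \<le> x p \<Longrightarrow> 1 \<le> p" using x0 i by (metis less_one not_le order_trans)
      ultimately show ?thesis using a by auto
    qed
    moreover have "card (s -` {p. 1 \<le> p \<and> i \<le> x p}) = card {p. 1 \<le> p \<and> i \<le> x p}"
      using s by (intro card_vimage_inj) (auto simp: bij_def)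
    ultimately show ?thesis by (simp add: conj_part_def)
  qed
  thus "a \<in> Rk k x" using Za by (simp add: Rk_def)
next
  assume "a \<in> Rk k x"
  then obtain w where "w \<in> Sk k" "a = x \<circ> w" using Sk_image_Rk[OF Zx] by auto
  moreover have "bij w" using \<open>w \<in> Sk k\<close> by (simp add: Sk_def permutes_bij)
  ultimately show "\<exists>s. bij s \<and> a = x \<circ> s" by blast
qed

lemma finite_bounded:
  assumes Z: "Zk k nu"
  shows "finite {a::nat \<Rightarrow> nat. \<forall>i. a i \<le> nu i}"
proof -
  let ?A = "{a::nat \<Rightarrow> nat. \<forall>i. a i \<le> nu i}"
  have "inj_on (\<lambda>a. restrict a {1..k}) ?A"
  proof (rule inj_onI)
    fix a b assume a: "a \<in> ?A" and b: "b \<in> ?A" and e: "restrict a {1..k} = restrict b {1..k}"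
    show "a = b"
    proof
      fix j show "a j = b j"
      proof (cases "j \<in> {1..k}")
        case True thus ?thesis using fun_cong[OF e, of j] by simp
      next
        case False
        hence "nu j = 0" using Z by (simp add: Zk_def)
        thus ?thesis using a b by (metis le_zero_eq mem_Collect_eq)
      qed
    qed
  qed
  moreover have "(\<lambda>a. restrict a {1..k}) ` ?A \<subseteq> PiE {1..k} (\<lambda>j. {0..nu j})" by auto
  moreover have "finite (PiE {1..k} (\<lambda>j. {0..nu j}))" by (intro finite_PiE) auto
  ultimately show ?thesis by (meson finite_imageD finite_subset)
qed

lemma part1:
  assumes Pl: "Pk_plus k lam" and Pm: "Pk_plus k mu" and Pn: "Pk_plus k nu"
  shows "fcoeff lam mu nu =
           int (card {(w, w'). w \<in> minreps k lam \<and> w' \<in> minreps k mu \<and>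
                      (\<forall>i\<in>{1..k}. lam (w i) + mu (w' i) = nu i)})"
proof -
  define A where "A = {a::nat \<Rightarrow> nat. \<forall>i. a i \<le> nu i}"
  define Pairs where "Pairs = {(w, w'). w \<in> minreps k lam \<and> w' \<in> minreps k mu \<and>
                      (\<forall>i\<in>{1..k}. lam (w i) + mu (w' i) = nu i)}"
  define T where "T = {a\<in>A. a \<in> Rk k lam \<and> (\<lambda>i. nu i - a i) \<in> Rk k mu}"
  have Zl: "Zk k lam" and Zm: "Zk k mu" and Zn: "Zk k nu" using Pl Pm Pn by (auto intro: Pk_Zk)
  have finA: "finite A" unfolding A_def by (rule finite_bounded[OF Zn])
  have hterm: "msym lam a * msym mu (\<lambda>i. nu i - a i) =
      (if a \<in> Rk k lam \<and> (\<lambda>i. nu i - a i) \<in> Rk k mu then 1 else 0)" if a: "a \<in> A" for a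
  proof -
    have "\<forall>i. a i \<le> nu i" using a by (simp add: A_def)
    hence Za: "Zk k a" using Zn unfolding Zk_def by (metis le_zero_eq)
    have Zb: "Zk k (\<lambda>i. nu i - a i)" using Zn by (auto simp: Zk_def)
    show ?thesis using msym_Rk[OF Zl Za] msym_Rk[OF Zm Zb] by (simp add: msym_def)
  qed
  have "fcoeff lam mu nu = (\<Sum>a\<in>A. msym lam a * msym mu (\<lambda>i. nu i - a i))"
    by (simp add: fcoeff_def series_mult_def A_def)
  also have "\<dots> = (\<Sum>a\<in>A. if a \<in> Rk k lam \<and> (\<lambda>i. nu i - a i) \<in> Rk k mu then 1 else 0)"
    using hterm by (rule sum.cong[OF refl])
  also have "\<dots> = (\<Sum>a\<in>T. 1)" unfolding T_def
    by (rule sum.inter_filter[OF finA, where g="\<lambda>_. 1::int", symmetric])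
  also have "\<dots> = int (card T)" by simp
  finally have f: "fcoeff lam mu nu = int (card T)" .
  define g where "g p = lam \<circ> fst p" for p :: "(nat \<Rightarrow> nat) \<times> (nat \<Rightarrow> nat)"
  have inj: "inj_on g Pairs"
  proof (rule inj_onI)
    fix p1 p2 assume p1: "p1 \<in> Pairs" and p2: "p2 \<in> Pairs" and e: "g p1 = g p2"
    obtain w1 w1' where p1e: "p1 = (w1, w1')" by fastforce
    obtain w2 w2' where p2e: "p2 = (w2, w2')" by fastforce
    have m1: "w1 \<in> minreps k lam" "w1' \<in> minreps k mu" and eq1: "\<forall>i\<in>{1..k}. lam (w1 i) + mu (w1' i) = nu i"
      using p1 p1e by (auto simp: Pairs_def)
    have m2: "w2 \<in> minreps k lam" "w2' \<in> minreps k mu" and eq2: "\<forall>i\<in>{1..k}. lam (w2 i) + mu (w2' i) = nu i"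
      using p2 p2e by (auto simp: Pairs_def)
    have e1: "lam \<circ> w1 = lam \<circ> w2" using e p1e p2e by (simp add: g_def)
    hence "w1 = w2" using minreps_inj[OF Pl] m1 m2 by (auto dest: inj_onD)
    have S1: "w1' \<in> Sk k" and S2: "w2' \<in> Sk k" using m1 m2 by (auto simp: minreps_def)
    have "mu \<circ> w1' = mu \<circ> w2'"
    proof
      fix i show "(mu \<circ> w1') i = (mu \<circ> w2') i"
      proof (cases "i \<in> {1..k}")
        case True
        hence "lam (w1 i) + mu (w1' i) = lam (w1 i) + mu (w2' i)"
          using eq1 eq2 \<open>w1 = w2\<close> by simp
        thus ?thesis by simp
      next
        case False thus ?thesis using Sk_out[OF S1] Sk_out[OF S2] by simp
      qed
    qed
    hence "w1' = w2'" using minreps_inj[OF Pm] m1 m2 by (auto dest: inj_onD)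
    thus "p1 = p2" using p1e p2e \<open>w1 = w2\<close> by simp
  qed
  have img: "g ` Pairs = T"
  proof
    show "g ` Pairs \<subseteq> T"
    proof
      fix a assume "a \<in> g ` Pairs"
      then obtain w w' where m: "w \<in> minreps k lam" "w' \<in> minreps k mu"
        and eq: "\<forall>i\<in>{1..k}. lam (w i) + mu (w' i) = nu i" and a: "a = lam \<circ> w"
        by (auto simp: Pairs_def g_def)
      have S: "w \<in> Sk k" "w' \<in> Sk k" using m by (auto simp: minreps_def)
      have aR: "a \<in> Rk k lam" using minreps_img[OF Pl] m a by blast
      have aA: "a \<in> A"
      proof -
        have "a i \<le> nu i" for i
        proof (cases "i \<in> {1..k}")
          case True thus ?thesis using eq a by fastforce
        next
          case False thus ?thesis using a Sk_out[OF S(1)] Zl by (simp add: Zk_def)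
        qed
        thus ?thesis by (simp add: A_def)
      qed
      have "(\<lambda>i. nu i - a i) = mu \<circ> w'"
      proof
        fix i show "nu i - a i = (mu \<circ> w') i"
        proof (cases "i \<in> {1..k}")
          case True thus ?thesis using eq a by fastforce
        next
          case False thus ?thesis using Sk_out[OF S(2)] Zm Zn by (simp add: Zk_def)
        qed
      qed
      hence "(\<lambda>i. nu i - a i) \<in> Rk k mu" using minreps_img[OF Pm] m by blast
      thus "a \<in> T" using aR aA by (simp add: T_def)
    qed
  next
    show "T \<subseteq> g ` Pairs"
    proof
      fix a assume aT: "a \<in> T"
      hence aA: "\<forall>i. a i \<le> nu i" and aR: "a \<in> Rk k lam" and bR: "(\<lambda>i. nu i - a i) \<in> Rk k mu"
        by (auto simp: T_def A_def)
      have "a \<in> (\<lambda>w. lam \<circ> w) ` minreps k lam" using aR minreps_img[OF Pl] by simp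
      then obtain w where w1: "a = lam \<circ> w" and w0: "w \<in> minreps k lam" by (rule imageE)
      have w: "w \<in> minreps k lam" "lam \<circ> w = a" using w0 w1 by simp_all
      have "(\<lambda>i. nu i - a i) \<in> (\<lambda>w. mu \<circ> w) ` minreps k mu" using bR minreps_img[OF Pm] by simp
      then obtain w' where w'1: "(\<lambda>i. nu i - a i) = mu \<circ> w'" and w'0: "w' \<in> minreps k mu" by (rule imageE)
      have w': "w' \<in> minreps k mu" "mu \<circ> w' = (\<lambda>i. nu i - a i)" using w'0 w'1 by simp_all
      have "\<forall>i\<in>{1..k}. lam (w i) + mu (w' i) = nu i"
      proof
        fix i
        have "lam (w i) = a i" "mu (w' i) = nu i - a i"
          using fun_cong[OF w(2), of i] fun_cong[OF w'(2), of i] by auto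
        thus "lam (w i) + mu (w' i) = nu i" using aA[rule_format, of i] by simp
      qed
      hence "(w, w') \<in> Pairs" using w w' by (simp add: Pairs_def)
      moreover have "g (w, w') = a" using w by (simp add: g_def)
      ultimately show "a \<in> g ` Pairs" by blast
    qed
  qed
  have "card Pairs = card T" using card_image[OF inj] img by simp
  thus ?thesis using f by (simp add: Pairs_def)
qed

definition Sset :: "nat \<Rightarrow> (nat \<Rightarrow> nat) \<Rightarrow> (nat \<Rightarrow> nat) \<Rightarrow> (nat \<Rightarrow> nat) set" where
  "Sset k lam mu = {b. Zk k b \<and> (\<forall>i\<ge>1. conj_part b i = conj_part mu i) \<and> (\<forall>j. b j \<le> lam j)}"

lemma conj_shift: "1 \<le> i \<Longrightarrow> conj_part (\<lambda>j. x j - 1) i = conj_part x (Suc i)"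
  unfolding conj_part_def by (rule arg_cong[where f=card]) auto

lemma conj_shift2: "1 \<le> i \<Longrightarrow> (\<And>j. y j = x j - 1) \<Longrightarrow> conj_part y i = conj_part x (Suc i)"
  unfolding conj_part_def by (rule arg_cong[where f=card]) auto

lemma card_supersets:
  assumes fin: "finite L" and AL: "A \<subseteq> L" and m: "card A \<le> m"
  shows "card {T. A \<subseteq> T \<and> T \<subseteq> L \<and> card T = m} = (card L - card A) choose (m - card A)"
proof -
  have finA: "finite A" using fin AL finite_subset by blast
  have "bij_betw (\<lambda>T. T - A) {T. A \<subseteq> T \<and> T \<subseteq> L \<and> card T = m} {B. B \<subseteq> L - A \<and> card B = m - card A}"
  proof (rule bij_betw_byWitness[where f'="\<lambda>B. B \<union> A"])
    show "\<forall>T\<in>{T. A \<subseteq> T \<and> T \<subseteq> L \<and> card T = m}. T - A \<union> A = T" by auto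
    show "\<forall>B\<in>{B. B \<subseteq> L - A \<and> card B = m - card A}. B \<union> A - A = B" by auto
    show "(\<lambda>T. T - A) ` {T. A \<subseteq> T \<and> T \<subseteq> L \<and> card T = m} \<subseteq> {B. B \<subseteq> L - A \<and> card B = m - card A}"
      using finA by (auto simp: card_Diff_subset)
    show "(\<lambda>B. B \<union> A) ` {B. B \<subseteq> L - A \<and> card B = m - card A} \<subseteq> {T. A \<subseteq> T \<and> T \<subseteq> L \<and> card T = m}"
    proof clarify
      fix B assume B: "B \<subseteq> L - A" "card B = m - card A"
      have "finite B" using B fin finite_subset by blast
      hence "card (B \<union> A) = card B + card A" using B finA by (subst card_Un_disjoint) auto
      thus "A \<subseteq> B \<union> A \<and> B \<union> A \<subseteq> L \<and> card (B \<union> A) = m" using B AL m by auto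
    qed
  qed
  hence "card {T. A \<subseteq> T \<and> T \<subseteq> L \<and> card T = m} = card {B. B \<subseteq> L - A \<and> card B = m - card A}"
    by (rule bij_betw_same_card)
  also have "\<dots> = card (L - A) choose (m - card A)" using fin by (intro n_subsets) auto
  also have "card (L - A) = card L - card A" using AL finA by (simp add: card_Diff_subset)
  finally show ?thesis .
qed

lemma conj_finite: "Zk k x \<Longrightarrow> 1 \<le> i \<Longrightarrow> finite {j. 1 \<le> j \<and> i \<le> x j}"
proof (rule finite_subset[of _ "{1..k}"])
  assume Z: "Zk k x" and i: "1 \<le> i"
  show "{j. 1 \<le> j \<and> i \<le> x j} \<subseteq> {1..k}"
  proof
    fix j assume "j \<in> {j. 1 \<le> j \<and> i \<le> x j}"
    hence "x j \<noteq> 0" using i by auto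
    thus "j \<in> {1..k}" using Z by (auto simp: Zk_def)
  qed
qed simp

lemma countC:
  "\<forall>lam mu. Zk k lam \<longrightarrow> Zk k mu \<longrightarrow> (\<forall>j. lam j \<le> N) \<longrightarrow> (\<forall>j. mu j \<le> N) \<longrightarrow>
     card (Sset k lam mu) = (\<Prod>i\<in>{1..N}. (conj_part lam i - conj_part mu (Suc i)) choose
                        (conj_part mu i - conj_part mu (Suc i)))"
proof (induction N)
  case 0
  show ?case
  proof (intro allI impI)
    fix lam mu :: "nat \<Rightarrow> nat"
    assume "Zk k lam" "Zk k mu" and l0: "\<forall>j. lam j \<le> 0" and m0: "\<forall>j. mu j \<le> 0"
    have "Sset k lam mu = {\<lambda>_. 0}"
    proof
      show "Sset k lam mu \<subseteq> {\<lambda>_. 0}" using l0 by (auto simp: Sset_def le_zero_eq)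
      have "mu = (\<lambda>_. 0)" using m0 by auto
      thus "{\<lambda>_. 0} \<subseteq> Sset k lam mu" by (auto simp: Sset_def Zk_def)
    qed
    thus "card (Sset k lam mu) = (\<Prod>i\<in>{1..0}. (conj_part lam i - conj_part mu (Suc i)) choose
                        (conj_part mu i - conj_part mu (Suc i)))" by simp
  qed
next
  case (Suc N)
  show ?case
  proof (intro allI impI)
    fix lam mu :: "nat \<Rightarrow> nat"
    assume Zl: "Zk k lam" and Zm: "Zk k mu" and lN: "\<forall>j. lam j \<le> Suc N" and mN: "\<forall>j. mu j \<le> Suc N"
    define lam1 where "lam1 j = lam j - 1" for j
    define mu1 where "mu1 j = mu j - 1" for j
    have Zl1: "Zk k lam1" and Zm1: "Zk k mu1" using Zl Zm by (auto simp: Zk_def lam1_def mu1_def)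
    have "card (Sset k lam1 mu1) = (\<Prod>i\<in>{1..N}. (conj_part lam1 i - conj_part mu1 (Suc i)) choose
                        (conj_part mu1 i - conj_part mu1 (Suc i)))"
    proof -
      have "\<forall>j. lam1 j \<le> N" "\<forall>j. mu1 j \<le> N" using lN mN by (auto simp: lam1_def mu1_def le_diff_conv)
      thus ?thesis using Suc.IH Zl1 Zm1 by blast
    qed
    also have "\<dots> = (\<Prod>i\<in>{1..N}. (conj_part lam (Suc i) - conj_part mu (Suc (Suc i))) choose
                        (conj_part mu (Suc i) - conj_part mu (Suc (Suc i))))"
    proof (rule prod.cong[OF refl])
      fix i assume "i \<in> {1..N}"
      hence i: "1 \<le> i" by simp
      have "conj_part lam1 i = conj_part lam (Suc i)" using i by (rule conj_shift2) (simp add: lam1_def)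
      moreover have "conj_part mu1 i = conj_part mu (Suc i)" using i by (rule conj_shift2) (simp add: mu1_def)
      moreover have "conj_part mu1 (Suc i) = conj_part mu (Suc (Suc i))" by (rule conj_shift2) (simp_all add: mu1_def)
      ultimately show "(conj_part lam1 i - conj_part mu1 (Suc i)) choose (conj_part mu1 i - conj_part mu1 (Suc i)) =
         (conj_part lam (Suc i) - conj_part mu (Suc (Suc i))) choose
                        (conj_part mu (Suc i) - conj_part mu (Suc (Suc i)))" by simp
    qed
    finally have IH: "card (Sset k lam1 mu1) = \<dots>" .
    define c where "c = (conj_part lam 1 - conj_part mu 2) choose (conj_part mu 1 - conj_part mu 2)"
    define L1 where "L1 = {j. 1 \<le> j \<and> 1 \<le> lam j}"
    define supp where "supp b = {j. 1 \<le> j \<and> 1 \<le> b j}" for b :: "nat \<Rightarrow> nat"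
    define Tset where "Tset b' = {T. supp b' \<subseteq> T \<and> T \<subseteq> L1 \<and> card T = conj_part mu 1}" for b'
    define f where "f b = ((\<lambda>j. b j - 1), supp b)" for b :: "nat \<Rightarrow> nat"
    define f' where "f' p = (\<lambda>j. if j \<in> snd p then Suc (fst p j) else 0)" for p :: "(nat \<Rightarrow> nat) \<times> nat set"
    have finL1: "finite L1" unfolding L1_def using conj_finite[OF Zl, of 1] by simp
    have cL1: "card L1 = conj_part lam 1" by (simp add: L1_def conj_part_def)
    have L1K: "L1 \<subseteq> {1..k}" using Zl by (auto simp: L1_def Zk_def)
    have b0: "b 0 = 0" if "Zk k b" for b using that by (simp add: Zk_def)
    have bij: "bij_betw f (Sset k lam mu) (Sigma (Sset k lam1 mu1) Tset)"
    proof (rule bij_betw_byWitness[where f'=f'])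
      show "\<forall>b\<in>Sset k lam mu. f' (f b) = b"
      proof
        fix b assume "b \<in> Sset k lam mu"
        hence "b 0 = 0" using b0 by (simp add: Sset_def)
        show "f' (f b) = b"
        proof
          fix j show "f' (f b) j = b j" using \<open>b 0 = 0\<close>
            by (cases "j = 0") (auto simp: f'_def f_def supp_def)
        qed
      qed
      show "\<forall>p\<in>Sigma (Sset k lam1 mu1) Tset. f (f' p) = p"
      proof
        fix p assume p: "p \<in> Sigma (Sset k lam1 mu1) Tset"
        obtain b' T where pe: "p = (b', T)" by fastforce
        have b': "b' \<in> Sset k lam1 mu1" and T: "T \<in> Tset b'" using p pe by auto
        have b'0: "b' 0 = 0" using b' b0 by (simp add: Sset_def)
        have T1: "supp b' \<subseteq> T" "T \<subseteq> L1" using T by (auto simp: Tset_def)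
        have e1: "(\<lambda>j. f' p j - 1) = b'"
        proof
          fix j show "f' p j - 1 = b' j"
          proof (cases "j \<in> T")
            case True thus ?thesis by (simp add: f'_def pe)
          next
            case False
            hence "j \<notin> supp b'" using T1 by blast
            hence "b' j = 0" using b'0 by (cases "j = 0") (auto simp: supp_def)
            thus ?thesis using False by (simp add: f'_def pe)
          qed
        qed
        have e2: "supp (f' p) = T" using T1 by (auto simp: supp_def f'_def pe L1_def)
        show "f (f' p) = p" using e1 e2 pe by (simp add: f_def)
      qed
      show "f ` Sset k lam mu \<subseteq> Sigma (Sset k lam1 mu1) Tset"
      proof (rule image_subsetI)
        fix b assume "b \<in> Sset k lam mu"
        hence Zb: "Zk k b" and cb: "\<forall>i\<ge>1. conj_part b i = conj_part mu i" and bl: "\<forall>j. b j \<le> lam j"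
          by (auto simp: Sset_def)
        have "(\<lambda>j. b j - 1) \<in> Sset k lam1 mu1"
        proof -
          have "Zk k (\<lambda>j. b j - 1)" using Zb by (simp add: Zk_def)
          moreover have "\<forall>i\<ge>1. conj_part (\<lambda>j. b j - 1) i = conj_part mu1 i"
          proof (intro allI impI)
            fix i :: nat assume i: "1 \<le> i"
            have "conj_part (\<lambda>j. b j - 1) i = conj_part b (Suc i)" using i by (rule conj_shift2) simp
            also have "\<dots> = conj_part mu (Suc i)" using cb by simp
            also have "\<dots> = conj_part mu1 i" using i by (rule conj_shift2[symmetric]) (simp add: mu1_def)
            finally show "conj_part (\<lambda>j. b j - 1) i = conj_part mu1 i" .
          qed
          moreover have "\<forall>j. b j - 1 \<le> lam1 j" using bl by (simp add: lam1_def diff_le_mono)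
          ultimately show ?thesis by (simp add: Sset_def)
        qed
        moreover have "supp b \<in> Tset (\<lambda>j. b j - 1)"
        proof -
          have "supp (\<lambda>j. b j - 1) \<subseteq> supp b" by (auto simp: supp_def)
          moreover have "supp b \<subseteq> L1" using bl by (auto simp: supp_def L1_def intro: order_trans)
          moreover have "card (supp b) = conj_part mu 1" using cb by (simp add: supp_def conj_part_def)
          ultimately show ?thesis by (simp add: Tset_def)
        qed
        ultimately show "f b \<in> Sigma (Sset k lam1 mu1) Tset" by (simp add: f_def)
      qed
      show "f' ` Sigma (Sset k lam1 mu1) Tset \<subseteq> Sset k lam mu"
      proof (rule image_subsetI)
        fix p assume p: "p \<in> Sigma (Sset k lam1 mu1) Tset"
        obtain b' T where pe: "p = (b', T)" by fastforce
        have b': "b' \<in> Sset k lam1 mu1" and T: "T \<in> Tset b'" using p pe by auto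
        have Zb': "Zk k b'" and cb': "\<forall>i\<ge>1. conj_part b' i = conj_part mu1 i" and bl': "\<forall>j. b' j \<le> lam1 j"
          using b' by (auto simp: Sset_def)
        have T1: "supp b' \<subseteq> T" "T \<subseteq> L1" "card T = conj_part mu 1" using T by (auto simp: Tset_def)
        define b where "b = f' (b', T)"
        have b'0: "b' j = 0" if "j \<notin> T" for j
        proof -
          have "j \<notin> supp b'" using T1 that by blast
          thus ?thesis using b0[OF Zb'] by (cases "j = 0") (auto simp: supp_def)
        qed
        have Zb: "Zk k b" using L1K T1(2) by (auto simp: Zk_def b_def f'_def)
        have cb: "conj_part b i = conj_part mu i" if i: "1 \<le> i" for i
        proof (cases "i = 1")
          case True
          have "{j. 1 \<le> j \<and> i \<le> b j} = T" using T1 True by (auto simp: b_def f'_def L1_def)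
          thus ?thesis using T1 True by (simp add: conj_part_def)
        next
          case False
          hence i2: "2 \<le> i" using i by simp
          have "{j. 1 \<le> j \<and> i \<le> b j} = {j. 1 \<le> j \<and> i - 1 \<le> b' j}"
          proof (intro Collect_cong)
            fix j show "(1 \<le> j \<and> i \<le> b j) = (1 \<le> j \<and> i - 1 \<le> b' j)"
              using b'0[of j] i2 by (cases "j \<in> T") (auto simp: b_def f'_def)
          qed
          hence "conj_part b i = conj_part b' (i - 1)" by (simp add: conj_part_def)
          also have "\<dots> = conj_part mu1 (i - 1)" using cb' i2 by simp
          also have "\<dots> = conj_part mu i" using i2 conj_shift[of "i - 1" mu] by (simp add: mu1_def[abs_def])
          finally show ?thesis .
        qed
        have bl: "b j \<le> lam j" for j
        proof (cases "j \<in> T")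
          case True
          hence "1 \<le> lam j" using T1 by (auto simp: L1_def)
          thus ?thesis using True bl'[rule_format, of j] by (simp add: b_def f'_def lam1_def)
        next
          case False thus ?thesis by (simp add: b_def f'_def)
        qed
        show "f' p \<in> Sset k lam mu" using Zb cb bl pe by (simp add: Sset_def b_def[symmetric])
      qed
    qed
    have finS1: "finite (Sset k lam1 mu1)"
      by (rule finite_subset[OF _ finite_bounded[OF Zl1]]) (auto simp: Sset_def)
    have cT: "card (Tset b') = c" if b': "b' \<in> Sset k lam1 mu1" for b'
    proof -
      have Zb': "Zk k b'" and cb': "\<forall>i\<ge>1. conj_part b' i = conj_part mu1 i" and bl': "\<forall>j. b' j \<le> lam1 j"
        using b' by (auto simp: Sset_def)
      have cs: "card (supp b') = conj_part mu 2"
        using cb' conj_shift[of 1 mu] by (simp add: supp_def conj_part_def[of b'] mu1_def[abs_def]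
           numeral_2_eq_2)
      have sL: "supp b' \<subseteq> L1"
      proof
        fix j assume "j \<in> supp b'"
        hence "1 \<le> j" "1 \<le> b' j" by (auto simp: supp_def)
        moreover have "b' j \<le> lam j - 1" using bl' by (simp add: lam1_def)
        ultimately show "j \<in> L1" by (simp add: L1_def)
      qed
      have "conj_part mu 2 \<le> conj_part mu 1" unfolding conj_part_def
        using conj_finite[OF Zm, of 1] by (intro card_mono) auto
      hence "card (Tset b') = (card L1 - card (supp b')) choose (conj_part mu 1 - card (supp b'))"
        unfolding Tset_def using cs by (intro card_supersets[OF finL1 sL]) simp
      thus ?thesis using cs cL1 by (simp add: c_def)
    qed
    have "card (Sset k lam mu) = card (Sigma (Sset k lam1 mu1) Tset)" using bij by (rule bij_betw_same_card)
    also have "\<dots> = (\<Sum>b'\<in>Sset k lam1 mu1. card (Tset b'))"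
      using finS1 finL1 by (intro card_SigmaI) (auto simp: Tset_def intro: finite_subset[of _ "Pow L1"])
    also have "\<dots> = card (Sset k lam1 mu1) * c" using cT by simp
    also have "\<dots> = c * (\<Prod>i\<in>{1..N}. (conj_part lam (Suc i) - conj_part mu (Suc (Suc i))) choose
                        (conj_part mu (Suc i) - conj_part mu (Suc (Suc i))))" using IH by simp
    also have "\<dots> = (\<Prod>i\<in>{1..Suc N}. (conj_part lam i - conj_part mu (Suc i)) choose
                        (conj_part mu i - conj_part mu (Suc i)))"
    proof -
      define g where "g i = (conj_part lam i - conj_part mu (Suc i)) choose
                        (conj_part mu i - conj_part mu (Suc i))" for i
      have "prod g {1..Suc N} = g 1 * prod g {Suc 1..Suc N}" by (rule prod.atLeast_Suc_atMost) simp
      also have "prod g {Suc 1..Suc N} = prod (\<lambda>i. g (Suc i)) {1..N}" by (rule prod.shift_bounds_cl_Suc_ivl)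
      finally have "prod g {1..Suc N} = g 1 * prod (\<lambda>i. g (Suc i)) {1..N}" .
      moreover have "g 1 = c" by (simp add: g_def c_def numeral_2_eq_2)
      ultimately show ?thesis by (simp add: g_def)
    qed
    finally show "card (Sset k lam mu) = \<dots>" .
  qed
qed

lemma not_sub_empty:
  assumes Pl: "Pk_plus k lam" and Pm: "Pk_plus k mu" and ns: "\<not> (\<forall>i. mu i \<le> lam i)"
  shows "Sset k lam mu = {}"
proof (rule ccontr)
  assume "Sset k lam mu \<noteq> {}"
  then obtain b where "b \<in> Sset k lam mu" by blast
  hence Zb: "Zk k b" and cb: "\<forall>i\<ge>1. conj_part b i = conj_part mu i" and bl: "\<forall>j. b j \<le> lam j"
    by (auto simp: Sset_def)
  obtain j where lt: "lam j < mu j" using ns by (auto simp: not_le)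
  have jK: "j \<in> {1..k}" using lt Pk_out[OF Pm, of j] by (cases "j \<in> {1..k}") auto
  define v where "v = lam j"
  have "{1..j} \<subseteq> {l. 1 \<le> l \<and> Suc v \<le> mu l}"
  proof
    fix l assume l: "l \<in> {1..j}"
    hence "mu j \<le> mu l" using Pk_dec[OF Pm, of l j] by simp
    thus "l \<in> {l. 1 \<le> l \<and> Suc v \<le> mu l}" using l lt by (simp add: v_def)
  qed
  hence "card {1..j} \<le> conj_part mu (Suc v)" unfolding conj_part_def
    using conj_finite[OF Pk_Zk[OF Pm], of "Suc v"] by (intro card_mono) auto
  hence c1: "j \<le> conj_part mu (Suc v)" by simp
  have "conj_part b (Suc v) \<le> conj_part lam (Suc v)" unfolding conj_part_def
    using conj_finite[OF Pk_Zk[OF Pl], of "Suc v"] bl by (intro card_mono) (auto intro: order_trans)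
  hence c2: "conj_part mu (Suc v) \<le> conj_part lam (Suc v)" using cb by simp
  have "{l. 1 \<le> l \<and> Suc v \<le> lam l} \<subseteq> {1..j - 1}"
  proof
    fix l assume l: "l \<in> {l. 1 \<le> l \<and> Suc v \<le> lam l}"
    have "\<not> j \<le> l"
    proof
      assume "j \<le> l"
      hence "lam l \<le> lam j" using Pk_dec[OF Pl, of j l] jK by simp
      thus False using l by (simp add: v_def)
    qed
    thus "l \<in> {1..j - 1}" using l by auto
  qed
  hence "conj_part lam (Suc v) \<le> j - 1" unfolding conj_part_def
    using card_mono[of "{1..j - 1}"] by fastforce
  moreover have "1 \<le> j" using jK by simp
  ultimately show False using c1 c2 by linarith
qed

lemma part2:
  assumes Pl: "Pk_plus k lam" and Pm: "Pk_plus k mu"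
  shows "chi lam mu = card {w \<in> minreps k mu. \<forall>i\<in>{1..k}. mu (w i) \<le> lam i}"
proof -
  define W where "W = {w \<in> minreps k mu. \<forall>i\<in>{1..k}. mu (w i) \<le> lam i}"
  have Zl: "Zk k lam" and Zm: "Zk k mu" using Pl Pm by (auto intro: Pk_Zk)
  have inj: "inj_on (\<lambda>w. mu \<circ> w) W" using minreps_inj[OF Pm] by (rule inj_on_subset) (auto simp: W_def)
  have img: "(\<lambda>w. mu \<circ> w) ` W = Sset k lam mu"
  proof
    show "(\<lambda>w. mu \<circ> w) ` W \<subseteq> Sset k lam mu"
    proof (rule image_subsetI)
      fix w assume w: "w \<in> W"
      hence wm: "w \<in> minreps k mu" and wl: "\<forall>i\<in>{1..k}. mu (w i) \<le> lam i" by (auto simp: W_def)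
      have "mu \<circ> w \<in> Rk k mu" using minreps_img[OF Pm] wm by blast
      moreover have "\<forall>j. (mu \<circ> w) j \<le> lam j"
      proof
        fix j show "(mu \<circ> w) j \<le> lam j"
        proof (cases "j \<in> {1..k}")
          case True thus ?thesis using wl by simp
        next
          case False
          have "w \<in> Sk k" using wm by (simp add: minreps_def)
          hence "w j = j" using False by (rule Sk_out)
          thus ?thesis using False Zm by (simp add: Zk_def)
        qed
      qed
      ultimately show "mu \<circ> w \<in> Sset k lam mu" by (simp add: Sset_def Rk_def)
    qed
  next
    show "Sset k lam mu \<subseteq> (\<lambda>w. mu \<circ> w) ` W"
    proof
      fix b assume b: "b \<in> Sset k lam mu"
      hence "b \<in> Rk k mu" and bl: "\<forall>j. b j \<le> lam j" by (auto simp: Sset_def Rk_def)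
      hence "b \<in> (\<lambda>w. mu \<circ> w) ` minreps k mu" using minreps_img[OF Pm] by simp
      then obtain w where wb: "b = mu \<circ> w" and wm: "w \<in> minreps k mu" by (rule imageE)
      have "w \<in> W" using wm bl wb by (simp add: W_def)
      thus "b \<in> (\<lambda>w. mu \<circ> w) ` W" using wb by blast
    qed
  qed
  have cW: "card W = card (Sset k lam mu)" using card_image[OF inj] img by simp
  show ?thesis
  proof (cases "\<forall>i. mu i \<le> lam i")
    case True
    have lb: "\<forall>j. lam j \<le> lam 1"
    proof
      fix j show "lam j \<le> lam 1"
        using Pk_dec[OF Pl, of 1 j] Pk_out[OF Pl, of j] by (cases "j = 0") auto
    qed
    hence mb: "\<forall>j. mu j \<le> lam 1" using True order_trans by blast
    have "card (Sset k lam mu) = (\<Prod>i\<in>{1..lam 1}. (conj_part lam i - conj_part mu (Suc i)) choose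
                        (conj_part mu i - conj_part mu (Suc i)))"
      using countC[of k "lam 1"] Zl Zm lb mb by blast
    thus ?thesis using True cW by (simp add: chi_def W_def)
  next
    case False
    hence "chi lam mu = 0" unfolding chi_def by meson
    thus ?thesis using cW not_sub_empty[OF Pl Pm False] by (simp add: W_def)
  qed
qed

theorem mainTheorem7:
  fixes k :: nat and lam mu nu :: "nat \<Rightarrow> nat"
  assumes "Pk_plus k lam" and "Pk_plus k mu" and "Pk_plus k nu"
  shows "(fcoeff lam mu nu =
           int (card {(w, w'). w \<in> minreps k lam \<and> w' \<in> minreps k mu \<and>
                      (\<forall>i\<in>{1..k}. lam (w i) + mu (w' i) = nu i)})) \<and>
         chi lam mu = card {w \<in> minreps k mu. \<forall>i\<in>{1..k}. mu (w i) \<le> lam i}"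
  using part1[OF assms] part2[OF assms(1,2)] by simp

end
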